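(* Let $n\ge 6$ with $n=3k$ for an integer $k$. Then $2k<\beta(H(n+1))<\beta(H(n+2))\le 2(k+1)$.
   Context: For $n\ge 5$, $H(n)$ is the graph with vertex set $V_1\cup V_2$, where $V_1=\{v_1,\dots,v_n\}$ and $V_2=\{v_iv_j: 1\le i<j\le n\}$ (each $v_iv_j$ a single vertex), and where $v_r\in V_1$ is adjacent to $v_iv_j\in V_2$ iff $r=i$ or $r=j$; there are no other edges. $d(u,v)$ is the shortest-path distance. A set $Q$ of vertices is a resolving set of a graph $G$ if any two distinct vertices $x,y$ satisfy $(d(x,q))_{q\in Q}\neq(d(y,q))_{q\in Q}$; $\beta(G)$ (the metric dimension) is the minimum size of a resolving set of $G$. *)

theory Defs
  imports Main
begin

definition is_walk :: "('a \<Rightarrow> 'a \<Rightarrow> bool) \<Rightarrow> 'a set \<Rightarrow> 'a list \<Rightarrow> bool" where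
  "is_walk E V xs \<longleftrightarrow> xs \<noteq> [] \<and> set xs \<subseteq> V \<and>
     (\<forall>i. Suc i < length xs \<longrightarrow> E (xs ! i) (xs ! Suc i))"

definition gdist :: "'a set \<Rightarrow> ('a \<Rightarrow> 'a \<Rightarrow> bool) \<Rightarrow> 'a \<Rightarrow> 'a \<Rightarrow> nat" where
  "gdist V E x y = (LEAST k. \<exists>xs. is_walk E V xs \<and> hd xs = x \<and> last xs = y \<and> length xs = Suc k)"

definition resolving_set :: "'a set \<Rightarrow> ('a \<Rightarrow> 'a \<Rightarrow> bool) \<Rightarrow> 'a set \<Rightarrow> bool" where
  "resolving_set V E Q \<longleftrightarrow> Q \<subseteq> V \<and>
     (\<forall>x\<in>V. \<forall>y\<in>V. x \<noteq> y \<longrightarrow> (\<exists>q\<in>Q. gdist V E x q \<noteq> gdist V E y q))"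

definition metric_dim :: "'a set \<Rightarrow> ('a \<Rightarrow> 'a \<Rightarrow> bool) \<Rightarrow> nat" where
  "metric_dim V E = (LEAST k. \<exists>Q. finite Q \<and> resolving_set V E Q \<and> card Q = k)"

datatype hvert = V1 nat | V2 nat nat

definition H_V :: "nat \<Rightarrow> hvert set" where
  "H_V n = {V1 r | r. 1 \<le> r \<and> r \<le> n} \<union> {V2 i j | i j. 1 \<le> i \<and> i < j \<and> j \<le> n}"

fun H_adj0 :: "hvert \<Rightarrow> hvert \<Rightarrow> bool" where
  "H_adj0 (V1 r) (V2 i j) = (r = i \<or> r = j)"
| "H_adj0 _ _ = False"

definition H_E :: "hvert \<Rightarrow> hvert \<Rightarrow> bool" where
  "H_E x y \<longleftrightarrow> H_adj0 x y \<or> H_adj0 y x"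

definition beta_H :: "nat \<Rightarrow> nat" where
  "beta_H n = metric_dim (H_V n) H_E"

end

theory Submission
  imports Defs
begin

lemma is_walk_single: "is_walk E V [a] \<longleftrightarrow> a \<in> V"
  by (auto simp: is_walk_def)

lemma is_walk_cons2: "is_walk E V (a # b # xs) \<longleftrightarrow> a \<in> V \<and> E a b \<and> is_walk E V (b # xs)"
proof
  assume h: "is_walk E V (a # b # xs)"
  have "E ((a#b#xs) ! 0) ((a#b#xs) ! Suc 0)" using h unfolding is_walk_def by (metis Suc_less_eq length_Cons zero_less_Suc)
  then have "E a b" by simp
  moreover have "\<forall>i. Suc i < length (b # xs) \<longrightarrow> E ((b#xs) ! i) ((b#xs) ! Suc i)"
  proof (intro allI impI)
    fix i assume "Suc i < length (b # xs)"
    then have "Suc (Suc i) < length (a # b # xs)" by simp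
    then have "E ((a#b#xs) ! Suc i) ((a#b#xs) ! Suc (Suc i))" using h unfolding is_walk_def by blast
    then show "E ((b#xs) ! i) ((b#xs) ! Suc i)" by simp
  qed
  ultimately show "a \<in> V \<and> E a b \<and> is_walk E V (b # xs)" using h unfolding is_walk_def by auto
next
  assume h: "a \<in> V \<and> E a b \<and> is_walk E V (b # xs)"
  show "is_walk E V (a # b # xs)" unfolding is_walk_def
  proof (intro conjI allI impI)
    show "a # b # xs \<noteq> []" by simp
    show "set (a # b # xs) \<subseteq> V" using h unfolding is_walk_def by auto
    fix i assume i: "Suc i < length (a # b # xs)"
    show "E ((a # b # xs) ! i) ((a # b # xs) ! Suc i)"
    proof (cases i)
      case 0 then show ?thesis using h by simp
    next
      case (Suc j)
      then have "Suc j < length (b # xs)" using i by simp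
      then show ?thesis using h Suc unfolding is_walk_def by simp
    qed
  qed
qed

lemma gdist_eq_generic:
  fixes h :: "'a \<Rightarrow> nat"
  assumes xV: "x \<in> V" and yV: "y \<in> V"
    and zero: "\<And>a. a \<in> V \<Longrightarrow> h a = 0 \<Longrightarrow> a = y"
    and hy: "h y = 0"
    and lip: "\<And>a b. a \<in> V \<Longrightarrow> b \<in> V \<Longrightarrow> E a b \<Longrightarrow> h a \<le> Suc (h b)"
    and step: "\<And>a m. a \<in> V \<Longrightarrow> h a = Suc m \<Longrightarrow> \<exists>b\<in>V. E a b \<and> h b = m"
  shows "gdist V E x y = h x"
proof -
  have ex: "\<And>a. a \<in> V \<Longrightarrow> h a = m \<Longrightarrow> \<exists>xs. is_walk E V xs \<and> hd xs = a \<and> last xs = y \<and> length xs = Suc m" for m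
  proof (induction m)
    case 0
    then have "a = y" using zero by blast
    then show ?case using 0 by (intro exI[of _ "[a]"]) (auto simp: is_walk_single)
  next
    case (Suc m)
    obtain b where b: "b \<in> V" "E a b" "h b = m" using step Suc.prems by blast
    obtain xs where xs: "is_walk E V xs" "hd xs = b" "last xs = y" "length xs = Suc m"
      using Suc.IH[OF b(1) b(3)] by blast
    obtain ys where ys: "xs = b # ys" using xs(2,4) by (cases xs) auto
    show ?case
      by (rule exI[of _ "a # xs"]) (use xs ys b Suc.prems in \<open>auto simp: is_walk_cons2\<close>)
  qed
  have lb: "\<And>a. is_walk E V xs \<Longrightarrow> hd xs = a \<Longrightarrow> last xs = y \<Longrightarrow> h a \<le> length xs - 1" for xs
  proof (induction xs)
    case Nil then show ?case by (simp add: is_walk_def)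
  next
    case (Cons c xs)
    show ?case
    proof (cases xs)
      case Nil then show ?thesis using Cons.prems hy by simp
    next
      case (Cons b ys)
      have w: "c \<in> V" "E c b" "is_walk E V (b # ys)" using Cons.prems(1) Cons by (auto simp: is_walk_cons2)
      have bV: "b \<in> V" using w(3) by (simp add: is_walk_def)
      have "h b \<le> length xs - 1" using Cons.IH[of b] w(3) Cons.prems Cons by simp
      moreover have "h c \<le> Suc (h b)" using lip w bV by blast
      ultimately show ?thesis using Cons.prems Cons by simp
    qed
  qed
  show ?thesis unfolding gdist_def
  proof (rule Least_equality)
    show "\<exists>xs. is_walk E V xs \<and> hd xs = x \<and> last xs = y \<and> length xs = Suc (h x)" using ex xV by blast
  next
    fix k assume "\<exists>xs. is_walk E V xs \<and> hd xs = x \<and> last xs = y \<and> length xs = Suc k"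
    then obtain xs where "is_walk E V xs" "hd xs = x" "last xs = y" "length xs = Suc k" by blast
    then show "h x \<le> k" using lb by fastforce
  qed
qed

fun hdist :: "hvert \<Rightarrow> hvert \<Rightarrow> nat" where
  "hdist (V1 r) (V1 s) = (if r = s then 0 else 2)"
| "hdist (V1 r) (V2 i j) = (if r = i \<or> r = j then 1 else 3)"
| "hdist (V2 i j) (V1 r) = (if r = i \<or> r = j then 1 else 3)"
| "hdist (V2 i j) (V2 k l) = (if i = k \<and> j = l then 0 else if i = k \<or> i = l \<or> j = k \<or> j = l then 2 else 4)"

lemma H_V_V1: "V1 r \<in> H_V n \<longleftrightarrow> 1 \<le> r \<and> r \<le> n" by (auto simp: H_V_def)
lemma H_V_V2: "V2 i j \<in> H_V n \<longleftrightarrow> 1 \<le> i \<and> i < j \<and> j \<le> n" by (auto simp: H_V_def)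

lemma H_E_simps:
  "H_E (V1 r) (V1 s) = False" "H_E (V2 i j) (V2 k l) = False"
  "H_E (V1 r) (V2 i j) = (r = i \<or> r = j)" "H_E (V2 i j) (V1 r) = (r = i \<or> r = j)"
  by (auto simp: H_E_def)



lemma step_V1V1: "V1 r \<in> H_V n \<Longrightarrow> V1 s \<in> H_V n \<Longrightarrow> hdist (V1 r) (V1 s) = Suc m \<Longrightarrow> \<exists>b\<in>H_V n. H_E (V1 r) b \<and> hdist b (V1 s) = m"
proof -
  assume a: "V1 r \<in> H_V n" "V1 s \<in> H_V n" "hdist (V1 r) (V1 s) = Suc m"
  then have rs: "r \<noteq> s" "m = 1" by (auto split: if_splits)
  show ?thesis
  proof (cases "r < s")
    case True
    then show ?thesis using a rs by (intro bexI[of _ "V2 r s"]) (simp_all add: H_V_V1 H_V_V2 H_E_simps)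
  next
    case False
    then have "s < r" using rs by simp
    then show ?thesis using a rs by (intro bexI[of _ "V2 s r"]) (simp_all add: H_V_V1 H_V_V2 H_E_simps)
  qed
qed


lemma lip_H: "H_E a b \<Longrightarrow> hdist a y \<le> Suc (hdist b y)"
  by (cases a; cases b; cases y; auto simp: H_E_simps)

lemma step_V1V2: "V1 r \<in> H_V n \<Longrightarrow> V2 k l \<in> H_V n \<Longrightarrow> hdist (V1 r) (V2 k l) = Suc m \<Longrightarrow> \<exists>b\<in>H_V n. H_E (V1 r) b \<and> hdist b (V2 k l) = m"
proof -
  assume a: "V1 r \<in> H_V n" "V2 k l \<in> H_V n" "hdist (V1 r) (V2 k l) = Suc m"
  show ?thesis
  proof (cases "r = k \<or> r = l")
    case True
    then show ?thesis using a by (intro bexI[of _ "V2 k l"]) (auto simp: H_E_simps)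
  next
    case False
    then have m: "m = 2" using a by simp
    show ?thesis
    proof (cases "r < k")
      case True
      then show ?thesis using a m False by (intro bexI[of _ "V2 r k"]) (simp_all add: H_V_V1 H_V_V2 H_E_simps)
    next
      case F2: False
      then have "k < r" using False by simp
      then show ?thesis using a m False by (intro bexI[of _ "V2 k r"]) (simp_all add: H_V_V1 H_V_V2 H_E_simps)
    qed
  qed
qed

lemma step_V2V1: "V2 i j \<in> H_V n \<Longrightarrow> V1 r \<in> H_V n \<Longrightarrow> hdist (V2 i j) (V1 r) = Suc m \<Longrightarrow> \<exists>b\<in>H_V n. H_E (V2 i j) b \<and> hdist b (V1 r) = m"
proof -
  assume a: "V2 i j \<in> H_V n" "V1 r \<in> H_V n" "hdist (V2 i j) (V1 r) = Suc m"
  show ?thesis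
  proof (cases "r = i \<or> r = j")
    case True
    then show ?thesis using a by (intro bexI[of _ "V1 r"]) (auto simp: H_E_simps)
  next
    case False
    then show ?thesis using a by (intro bexI[of _ "V1 i"]) (simp_all add: H_V_V1 H_V_V2 H_E_simps)
  qed
qed

lemma step_V2V2: "V2 i j \<in> H_V n \<Longrightarrow> V2 k l \<in> H_V n \<Longrightarrow> hdist (V2 i j) (V2 k l) = Suc m \<Longrightarrow> \<exists>b\<in>H_V n. H_E (V2 i j) b \<and> hdist b (V2 k l) = m"
proof -
  assume a: "V2 i j \<in> H_V n" "V2 k l \<in> H_V n" "hdist (V2 i j) (V2 k l) = Suc m"
  show ?thesis
  proof (cases "i = k \<or> i = l")
    case True
    then show ?thesis using a by (intro bexI[of _ "V1 i"]) (auto simp: H_V_V1 H_V_V2 H_E_simps split: if_splits)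
  next
    case F1: False
    show ?thesis
    proof (cases "j = k \<or> j = l")
      case True
      then show ?thesis using a F1 by (intro bexI[of _ "V1 j"]) (auto simp: H_V_V1 H_V_V2 H_E_simps split: if_splits)
    next
      case False
      then show ?thesis using a F1 by (intro bexI[of _ "V1 i"]) (auto simp: H_V_V1 H_V_V2 H_E_simps split: if_splits)
    qed
  qed
qed

lemma gdist_H:
  assumes "x \<in> H_V n" "y \<in> H_V n"
  shows "gdist (H_V n) H_E x y = hdist x y"
proof (rule gdist_eq_generic[OF assms, where h="\<lambda>a. hdist a y"])
  show "\<And>a. a \<in> H_V n \<Longrightarrow> hdist a y = 0 \<Longrightarrow> a = y"
    by (cases y; case_tac a; simp split: if_splits)
  show "hdist y y = 0" by (cases y) auto
  show "\<And>a b. a \<in> H_V n \<Longrightarrow> b \<in> H_V n \<Longrightarrow> H_E a b \<Longrightarrow> hdist a y \<le> Suc (hdist b y)"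
    using lip_H by blast
  show "\<And>a m. a \<in> H_V n \<Longrightarrow> hdist a y = Suc m \<Longrightarrow> \<exists>b\<in>H_V n. H_E a b \<and> hdist b y = m"
  proof -
    fix a m assume a: "a \<in> H_V n" "hdist a y = Suc m"
    show "\<exists>b\<in>H_V n. H_E a b \<and> hdist b y = m"
    proof (cases a)
      case (V1 r) then show ?thesis using a assms(2) step_V1V1 step_V1V2 by (cases y) blast+
    next
      case (V2 i j) then show ?thesis using a assms(2) step_V2V1 step_V2V2 by (cases y) blast+
    qed
  qed
qed

lemma resolving_H:
  "resolving_set (H_V n) H_E Q \<longleftrightarrow> Q \<subseteq> H_V n \<and>
     (\<forall>x\<in>H_V n. \<forall>y\<in>H_V n. x \<noteq> y \<longrightarrow> (\<exists>q\<in>Q. hdist x q \<noteq> hdist y q))"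
proof -
  have "\<And>x y q. x \<in> H_V n \<Longrightarrow> y \<in> H_V n \<Longrightarrow> q \<in> Q \<Longrightarrow> Q \<subseteq> H_V n \<Longrightarrow>
     (gdist (H_V n) H_E x q \<noteq> gdist (H_V n) H_E y q) = (hdist x q \<noteq> hdist y q)"
    using gdist_H by (metis subsetD)
  then show ?thesis unfolding resolving_set_def by meson
qed


definition isE :: "nat \<Rightarrow> nat \<Rightarrow> bool" where
  "isE m a \<longleftrightarrow> 1 \<le> a \<and> a + 1 \<le> m \<and> a mod 3 \<noteq> 0"

lemma core_arith:
  assumes "w mod 3 = 1" "y \<noteq> w" "y \<noteq> w+1" "y \<noteq> w+2" "1 \<le> y" "y \<le> m" "m mod 3 = 0"
  shows "\<exists>a. isE m a \<and> (y = a \<or> y = a+1) \<and> a \<noteq> w \<and> a \<noteq> w+1 \<and> a \<noteq> w+2 \<and> a+1 \<noteq> w \<and> a+1 \<noteq> w+1 \<and> a+1 \<noteq> w+2"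
proof (cases "y mod 3 = 1")
  case True
  have "y + 1 \<le> m" using True assms(6,7) by presburger
  moreover have "y + 1 \<noteq> w" using True assms(1) by presburger
  ultimately show ?thesis using True assms unfolding isE_def by (intro exI[of _ y]) simp
next
  case False
  have y2: "y \<ge> 2" using False assms(5) by presburger
  have "(y - 1) mod 3 \<noteq> 0" using False y2 by presburger
  moreover have "y - 1 \<noteq> w + 2" using False y2 assms(1) by presburger
  moreover have "y - 1 \<noteq> w" using y2 assms(3) by simp
  ultimately show ?thesis using y2 assms unfolding isE_def by (intro exI[of _ "y - 1"]) auto
qed
lemma V1_arith:
  assumes "r \<noteq> s" "1 \<le> r" "r \<le> m" "m mod 3 = 0"
  shows "\<exists>a. isE m a \<and> ((r = a \<or> r = a+1) \<noteq> (s = a \<or> s = a+1))"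
proof -
  consider "r mod 3 = 1" | "r mod 3 = 2" | "r mod 3 = 0" by arith
  then show ?thesis
  proof cases
    case 1
    show ?thesis
    proof (cases "s = r + 1")
      case True then show ?thesis using assms 1 unfolding isE_def by (intro exI[of _ "r+1"]) presburger
    next
      case False then show ?thesis using assms 1 unfolding isE_def by (intro exI[of _ "r"]) presburger
    qed
  next
    case 2
    show ?thesis
    proof (cases "s = r - 1")
      case True then show ?thesis using assms 2 unfolding isE_def by (intro exI[of _ "r"]) presburger
    next
      case False then show ?thesis using assms 2 unfolding isE_def by (intro exI[of _ "r - 1"]) presburger
    qed
  next
    case 3
    show ?thesis
    proof (cases "s = r - 1")
      case True then show ?thesis using assms 3 unfolding isE_def by (intro exI[of _ "r - 2"]) presburger
    next
      case False then show ?thesis using assms 3 unfolding isE_def by (intro exI[of _ "r - 1"]) presburger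
    qed
  qed
qed

lemma mem_lemma:
  fixes P P' :: "nat set"
  assumes P: "P = {i,j}" "i \<noteq> j" and P': "P' = {k,l}" "k \<noteq> l"
    and Pn: "P \<subseteq> {1..n}" "P' \<subseteq> {1..n}"
    and mm: "m mod 3 = 0" "m \<le> n"
    and hA: "\<And>r. m < r \<Longrightarrow> r \<le> n \<Longrightarrow> r \<in> P \<longleftrightarrow> r \<in> P'"
    and hE0: "\<And>a. isE m a \<Longrightarrow> P = {a, a+1} \<longleftrightarrow> P' = {a, a+1}"
    and hE: "\<And>a. isE m a \<Longrightarrow> (a \<in> P \<or> a+1 \<in> P) \<longleftrightarrow> (a \<in> P' \<or> a+1 \<in> P')"
    and v: "v \<in> P"
  shows "v \<in> P'"
proof (rule ccontr)
  assume nv: "v \<notin> P'"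
  have v1: "1 \<le> v" "v \<le> n" using v Pn by auto
  have vm: "v \<le> m" using hA[of v] v nv v1 by (meson not_le)
  have yP: "\<And>y. y \<in> P \<Longrightarrow> 1 \<le> y \<and> y \<le> n" "\<And>y. y \<in> P' \<Longrightarrow> 1 \<le> y \<and> y \<le> n" using Pn by auto
  consider "v mod 3 = 1" | "v mod 3 = 2" | "v mod 3 = 0" by arith
  then show False
  proof cases
    case 1
    have e1: "isE m v" using 1 vm v1 mm unfolding isE_def by presburger
    have e2: "isE m (v+1)" using 1 vm v1 mm unfolding isE_def by presburger
    have "v+1 \<in> P'" using hE[OF e1] v nv by auto
    then have "v+1 \<in> P \<or> v+1+1 \<in> P" using hE[OF e2] by auto
    moreover have "v+1 \<notin> P"
    proof
      assume "v+1 \<in> P"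
      then have "P = {v, v+1}" using P v by auto
      then have "P' = {v, v+1}" using hE0[OF e1] by simp
      then show False using nv by simp
    qed
    ultimately have "v+2 \<in> P" by simp
    then have PP: "P = {v, v+2}" using P v by auto
    obtain y where y: "P' = {v+1, y}" "y \<noteq> v+1" using \<open>v+1 \<in> P'\<close> P' by auto
    have "y \<noteq> v" using y nv by auto
    have "y \<noteq> v+2"
    proof
      assume "y = v+2"
      then have "P' = {v+1, v+1+1}" using y by simp
      then have "P = {v+1, v+1+1}" using hE0[OF e2] by simp
      then show False using v by simp
    qed
    have yn: "1 \<le> y" "y \<le> n" using yP(2)[of y] y by auto
    show False
    proof (cases "m < y")
      case True
      then have "y \<in> P" using hA[of y] yn y by auto
      then show False using PP True e2 \<open>y \<noteq> v\<close> unfolding isE_def by auto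
    next
      case False
      obtain a where a: "isE m a" "y = a \<or> y = a+1" "a \<noteq> v" "a \<noteq> v+1" "a \<noteq> v+2" "a+1 \<noteq> v" "a+1 \<noteq> v+1" "a+1 \<noteq> v+2"
        using core_arith[of v y m] 1 \<open>y \<noteq> v\<close> y(2) \<open>y \<noteq> v+2\<close> yn False mm by auto
      have "a \<in> P' \<or> a+1 \<in> P'" using a(2) y by auto
      then have "a \<in> P \<or> a+1 \<in> P" using hE[OF a(1)] by blast
      then show False using PP a by auto
    qed
  next
    case 3
    have v3: "v \<ge> 3" using 3 v1 by presburger
    define u where "u = v - 2"
    have u: "v = u + 2" using v3 unfolding u_def by simp
    have u1: "u mod 3 = 1" using 3 u by presburger
    have e1: "isE m (u+1)" using u1 u vm v1 mm unfolding isE_def by presburger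
    have e2: "isE m u" using u1 u vm v1 mm unfolding isE_def by presburger
    have "u+1 \<in> P' \<or> u+1+1 \<in> P'" using hE[OF e1] v u by auto
    then have "u+1 \<in> P'" using nv u by auto
    then have "u \<in> P \<or> u+1 \<in> P" using hE[OF e2] by auto
    moreover have "u+1 \<notin> P"
    proof
      assume "u+1 \<in> P"
      then have "P = {u+1, u+1+1}" using P v u by auto
      then have "P' = {u+1, u+1+1}" using hE0[OF e1] by simp
      then show False using nv u by simp
    qed
    ultimately have "u \<in> P" by simp
    then have PP: "P = {u, u+2}" using P v u by auto
    obtain y where y: "P' = {u+1, y}" "y \<noteq> u+1" using \<open>u+1 \<in> P'\<close> P' by auto
    have "y \<noteq> u+2" using y nv u by auto
    have "y \<noteq> u"
    proof
      assume "y = u"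
      then have "P' = {u, u+1}" using y by auto
      then have "P = {u, u+1}" using hE0[OF e2] by simp
      then show False using v u by simp
    qed
    have yn: "1 \<le> y" "y \<le> n" using yP(2)[of y] y by auto
    show False
    proof (cases "m < y")
      case True
      then have "y \<in> P" using hA[of y] yn y by auto
      then show False using PP True vm u \<open>y \<noteq> u\<close> by auto
    next
      case False
      obtain a where a: "isE m a" "y = a \<or> y = a+1" "a \<noteq> u" "a \<noteq> u+1" "a \<noteq> u+2" "a+1 \<noteq> u" "a+1 \<noteq> u+1" "a+1 \<noteq> u+2"
        using core_arith[of u y m] u1 \<open>y \<noteq> u\<close> y(2) \<open>y \<noteq> u+2\<close> yn False mm by auto
      have "a \<in> P' \<or> a+1 \<in> P'" using a(2) y by auto
      then have "a \<in> P \<or> a+1 \<in> P" using hE[OF a(1)] by blast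
      then show False using PP a by auto
    qed
  next
    case 2
    define u where "u = v - 1"
    have u: "v = u + 1" using v1 unfolding u_def by simp
    have u1: "u mod 3 = 1" using 2 u by presburger
    have e1: "isE m u" using u1 u vm v1 mm unfolding isE_def by presburger
    have e2: "isE m (u+1)" using u1 u vm v1 mm unfolding isE_def by presburger
    have "u \<in> P' \<or> u+1 \<in> P'" using hE[OF e1] v u by auto
    then have "u \<in> P'" using nv u by auto
    have "u+1 \<in> P' \<or> u+1+1 \<in> P'" using hE[OF e2] v u by auto
    then have "u+2 \<in> P'" using nv u by auto
    have PP': "P' = {u, u+2}" using P' \<open>u \<in> P'\<close> \<open>u+2 \<in> P'\<close> by auto
    obtain y where y: "P = {u+1, y}" "y \<noteq> u+1" using v u P by auto
    have "y \<noteq> u"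
    proof
      assume "y = u"
      then have "P = {u, u+1}" using y by auto
      then have "P' = {u, u+1}" using hE0[OF e1] by simp
      then show False using nv u by auto
    qed
    have "y \<noteq> u+2"
    proof
      assume "y = u+2"
      then have "P = {u+1, u+1+1}" using y by auto
      then have "P' = {u+1, u+1+1}" using hE0[OF e2] by simp
      then show False using nv u by auto
    qed
    have yn: "1 \<le> y" "y \<le> n" using yP(1)[of y] y by auto
    show False
    proof (cases "m < y")
      case True
      then have "y \<in> P'" using hA[of y] yn y by auto
      then show False using PP' True vm u \<open>y \<noteq> u\<close> \<open>y \<noteq> u+2\<close> by auto
    next
      case False
      obtain a where a: "isE m a" "y = a \<or> y = a+1" "a \<noteq> u" "a \<noteq> u+1" "a \<noteq> u+2" "a+1 \<noteq> u" "a+1 \<noteq> u+1" "a+1 \<noteq> u+2"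
        using core_arith[of u y m] u1 \<open>y \<noteq> u\<close> y(2) \<open>y \<noteq> u+2\<close> yn False mm by auto
      have "a \<in> P \<or> a+1 \<in> P" using a(2) y by auto
      then have "a \<in> P' \<or> a+1 \<in> P'" using hE[OF a(1)] by blast
      then show False using PP' a by auto
    qed
  qed
qed

definition Qc :: "nat \<Rightarrow> nat \<Rightarrow> hvert set" where
  "Qc n m = V1 ` {m<..n} \<union> (\<lambda>a. V2 a (Suc a)) ` {a. isE m a}"

lemma isE_set_card: "card {a. isE (3*k) a} = 2 * k"
proof (induction k)
  case 0 then show ?case by (simp add: isE_def)
next
  case (Suc k)
  have "{a. isE (3 * Suc k) a} = insert (3*k+1) (insert (3*k+2) {a. isE (3*k) a})"
    unfolding isE_def by (auto; presburger)
  moreover have "finite {a. isE (3*k) a}" unfolding isE_def by (rule finite_subset[of _ "{..3*k}"]) auto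
  moreover have "3*k+1 \<notin> {a. isE (3*k) a}" "3*k+2 \<notin> {a. isE (3*k) a}" unfolding isE_def by auto
  ultimately show ?case using Suc by simp
qed

lemma isE_finite: "finite {a. isE m a}"
  unfolding isE_def by (rule finite_subset[of _ "{..m}"]) auto

lemma Qc_card:
  assumes "m = 3*k"
  shows "card (Qc n m) = (n - m) + 2 * k"
proof -
  have "card (V1 ` {m<..n}) = n - m" by (simp add: card_image inj_on_def)
  moreover have "card ((\<lambda>a. V2 a (Suc a)) ` {a. isE m a}) = 2 * k"
    using isE_set_card[of k] assms by (simp add: card_image inj_on_def)
  moreover have "V1 ` {m<..n} \<inter> (\<lambda>a. V2 a (Suc a)) ` {a. isE m a} = {}" by auto
  ultimately show ?thesis unfolding Qc_def using isE_finite
    by (simp add: card_Un_disjoint)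
qed

lemma Qc_finite: "finite (Qc n m)"
  unfolding Qc_def using isE_finite by simp

lemma hdist_V2_edge:
  assumes "i < j"
  shows "hdist (V2 i j) (V2 a (Suc a)) = (if {i,j} = {a, a+1} then 0 else if a \<in> {i,j} \<or> a+1 \<in> {i,j} then 2 else 4)"
  using assms by (auto simp: doubleton_eq_iff)

lemma Qc_res:
  assumes mm: "m mod 3 = 0" "m < n"
  shows "resolving_set (H_V n) H_E (Qc n m)"
  unfolding resolving_H
proof (intro conjI ballI impI)
  show "Qc n m \<subseteq> H_V n" unfolding Qc_def using assms by (auto simp: H_V_V1 H_V_V2 isE_def)
next
  fix x y assume x: "x \<in> H_V n" and y: "y \<in> H_V n" and xy: "x \<noteq> y"
  have nQ: "V1 n \<in> Qc n m" unfolding Qc_def using assms by auto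
  have EQ: "\<And>a. isE m a \<Longrightarrow> V2 a (Suc a) \<in> Qc n m" unfolding Qc_def by auto
  have AQ: "\<And>r. m < r \<Longrightarrow> r \<le> n \<Longrightarrow> V1 r \<in> Qc n m" unfolding Qc_def by auto
  show "\<exists>q\<in>Qc n m. hdist x q \<noteq> hdist y q"
  proof (cases x)
    case (V1 r)
    show ?thesis
    proof (cases y)
      case (V1 s)
      have rs: "r \<noteq> s" "1 \<le> r" "r \<le> n" "1 \<le> s" "s \<le> n" using xy x y \<open>x = V1 r\<close> V1 by (auto simp: H_V_V1)
      show ?thesis
      proof (cases "m < r")
        case True then show ?thesis using AQ[of r] rs \<open>x = V1 r\<close> V1 by (intro bexI[of _ "V1 r"]) auto
      next
        case F1: False
        show ?thesis
        proof (cases "m < s")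
          case True then show ?thesis using AQ[of s] rs \<open>x = V1 r\<close> V1 by (intro bexI[of _ "V1 s"]) auto
        next
          case False
          obtain a where a: "isE m a" "(r = a \<or> r = a+1) \<noteq> (s = a \<or> s = a+1)"
            using V1_arith[of r s m] rs F1 mm by auto
          show ?thesis using EQ[OF a(1)] a(2) \<open>x = V1 r\<close> V1 by (intro bexI[of _ "V2 a (Suc a)"]) auto
        qed
      qed
    next
      case (V2 k l)
      show ?thesis using nQ \<open>x = V1 r\<close> V2 by (intro bexI[of _ "V1 n"]) auto
    qed
  next
    case (V2 i j)
    show ?thesis
    proof (cases y)
      case (V1 s)
      show ?thesis using nQ \<open>x = V2 i j\<close> V1 by (intro bexI[of _ "V1 n"]) auto
    next
      case (V2 k l)
      have ij: "1 \<le> i" "i < j" "j \<le> n" "1 \<le> k" "k < l" "l \<le> n" using x y \<open>x = V2 i j\<close> V2 by (auto simp: H_V_V2)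
      show ?thesis
      proof (rule ccontr)
        assume "\<not> ?thesis"
        then have same: "\<And>q. q \<in> Qc n m \<Longrightarrow> hdist (V2 i j) q = hdist (V2 k l) q" using \<open>x = V2 i j\<close> V2 by auto
        have hA: "\<And>r. m < r \<Longrightarrow> r \<le> n \<Longrightarrow> r \<in> {i,j} \<longleftrightarrow> r \<in> {k,l}"
        proof -
          fix r assume "m < r" "r \<le> n"
          then have "hdist (V2 i j) (V1 r) = hdist (V2 k l) (V1 r)" using same AQ by blast
          then show "r \<in> {i,j} \<longleftrightarrow> r \<in> {k,l}" by (auto split: if_splits)
        qed
        have hE0: "\<And>a. isE m a \<Longrightarrow> {i,j} = {a, a+1} \<longleftrightarrow> {k,l} = {a, a+1}"
        proof -
          fix a assume "isE m a"
          then have "hdist (V2 i j) (V2 a (Suc a)) = hdist (V2 k l) (V2 a (Suc a))" using same EQ by blast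
          then show "{i,j} = {a, a+1} \<longleftrightarrow> {k,l} = {a, a+1}" unfolding hdist_V2_edge[OF ij(2)] hdist_V2_edge[OF ij(5)]
            by (auto split: if_splits)
        qed
        have hE: "\<And>a. isE m a \<Longrightarrow> (a \<in> {i,j} \<or> a+1 \<in> {i,j}) \<longleftrightarrow> (a \<in> {k,l} \<or> a+1 \<in> {k,l})"
        proof -
          fix a assume "isE m a"
          then have "hdist (V2 i j) (V2 a (Suc a)) = hdist (V2 k l) (V2 a (Suc a))" using same EQ by blast
          then show "(a \<in> {i,j} \<or> a+1 \<in> {i,j}) \<longleftrightarrow> (a \<in> {k,l} \<or> a+1 \<in> {k,l})"
            unfolding hdist_V2_edge[OF ij(2)] hdist_V2_edge[OF ij(5)]
            by (auto split: if_splits)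
        qed
        have s1: "{i,j} \<subseteq> {k,l}"
        proof
          fix v assume "v \<in> {i,j}"
          show "v \<in> {k,l}"
            by (rule mem_lemma[of "{i,j}" i j "{k,l}" k l n m]) (use ij mm hA hE0 hE \<open>v \<in> {i,j}\<close> in auto)
        qed
        have s2: "{k,l} \<subseteq> {i,j}"
        proof
          fix v assume "v \<in> {k,l}"
          show "v \<in> {i,j}"
            by (rule mem_lemma[of "{k,l}" k l "{i,j}" i j n m]) (use ij mm hA hE0 hE \<open>v \<in> {k,l}\<close> in auto)
        qed
        have "{i,j} = {k,l}" using s1 s2 by auto
        then have "i = k \<and> j = l" using ij by (auto simp: doubleton_eq_iff)
        then show False using xy \<open>x = V2 i j\<close> V2 by simp
      qed
    qed
  qed
qed

lemma beta_le:
  assumes "m = 3*k" "m < n"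
  shows "beta_H n \<le> (n - m) + 2*k"
proof -
  have "finite (Qc n m) \<and> resolving_set (H_V n) H_E (Qc n m) \<and> card (Qc n m) = (n - m) + 2*k"
    using Qc_finite Qc_res[of m n] Qc_card[OF assms(1)] assms by auto
  then show ?thesis unfolding beta_H_def metric_dim_def by (intro Least_le) blast
qed

lemma hd_V1V2: "hdist (V1 r) (V2 i j) = (if r \<in> {i,j} then 1 else 3)" by auto
lemma hd_V2V1: "hdist (V2 i j) (V1 r) = (if r \<in> {i,j} then 1 else 3)" by auto
lemma hd_V2V2: "i < j \<Longrightarrow> k < l \<Longrightarrow> hdist (V2 i j) (V2 k l) = (if {i,j} = {k,l} then 0 else if {i,j} \<inter> {k,l} \<noteq> {} then 2 else 4)"
  by (auto simp: doubleton_eq_iff)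

locale lbctx =
  fixes n :: nat and Q :: "hvert set"
  assumes QV: "Q \<subseteq> H_V n"
  and res: "\<And>x y. x \<in> H_V n \<Longrightarrow> y \<in> H_V n \<Longrightarrow> x \<noteq> y \<Longrightarrow> \<exists>q\<in>Q. hdist x q \<noteq> hdist y q"
begin

definition A where "A = {r. V1 r \<in> Q}"
definition PQ where "PQ = {(i,j). V2 i j \<in> Q}"
definition F where "F = (\<lambda>(i,j). {i,j}) ` PQ"
definition deg where "deg v = card {e\<in>F. v\<in>e}"
definition N where "N = {1..n}"

lemma PQ_sub: "(i,j) \<in> PQ \<Longrightarrow> 1 \<le> i \<and> i < j \<and> j \<le> n"
  using QV unfolding PQ_def by (auto simp: H_V_V2)

lemma A_sub: "A \<subseteq> N"
  using QV unfolding A_def N_def by (auto simp: H_V_V1)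

lemma PQ_finite: "finite PQ"
proof -
  have "PQ \<subseteq> {..n} \<times> {..n}" using PQ_sub by fastforce
  then show ?thesis using finite_subset by blast
qed

lemma F_finite: "finite F" unfolding F_def using PQ_finite by simp

lemma F_elem: "e \<in> F \<Longrightarrow> \<exists>i j. e = {i,j} \<and> V2 i j \<in> Q \<and> 1 \<le> i \<and> i < j \<and> j \<le> n"
  unfolding F_def using PQ_sub by (auto simp: PQ_def)

lemma F_sub: "e \<in> F \<Longrightarrow> e \<subseteq> N" using F_elem unfolding N_def by fastforce

lemma F_card: "e \<in> F \<Longrightarrow> card e = 2" using F_elem by fastforce

lemma F_two: "e \<in> F \<Longrightarrow> v \<in> e \<Longrightarrow> \<exists>a. a \<noteq> v \<and> e = {v, a}"
  using F_elem by fastforce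

lemma Q_cases:
  assumes "q \<in> Q"
  obtains t where "t \<in> A" "q = V1 t" | i j where "q = V2 i j" "i < j" "{i,j} \<in> F"
proof (cases q)
  case (V1 t) then show ?thesis using that assms unfolding A_def by auto
next
  case (V2 i j)
  then have "(i,j) \<in> PQ" using assms unfolding PQ_def by auto
  then show ?thesis using that V2 PQ_sub unfolding F_def by force
qed

lemma cardQ: "card Q = card A + card F"
proof -
  have Qeq: "Q = V1 ` A \<union> (\<lambda>(i,j). V2 i j) ` PQ"
  proof
    show "Q \<subseteq> V1 ` A \<union> (\<lambda>(i,j). V2 i j) ` PQ"
    proof
      fix q assume "q \<in> Q"
      then show "q \<in> V1 ` A \<union> (\<lambda>(i,j). V2 i j) ` PQ" unfolding A_def PQ_def by (cases q) auto
    qed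
    show "V1 ` A \<union> (\<lambda>(i,j). V2 i j) ` PQ \<subseteq> Q" unfolding A_def PQ_def by auto
  qed
  have fA: "finite A" using A_sub unfolding N_def using finite_subset by blast
  have "card (V1 ` A) = card A" by (simp add: card_image inj_on_def)
  moreover have "card ((\<lambda>(i,j). V2 i j) ` PQ) = card PQ" by (rule card_image) (auto simp: inj_on_def)
  moreover have "card F = card PQ" unfolding F_def
  proof (rule card_image)
    show "inj_on (\<lambda>(i, j). {i, j}) PQ"
    proof (rule inj_onI)
      fix x y assume "x \<in> PQ" "y \<in> PQ" "(\<lambda>(i, j). {i, j::nat}) x = (\<lambda>(i, j). {i, j}) y"
      moreover obtain a b c d where ab: "x = (a,b)" "y = (c,d)" by (cases x; cases y) auto
      ultimately have "a < b" "c < d" "{a,b} = {c,d}" using PQ_sub by auto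
      then show "x = y" using ab by (auto simp: doubleton_eq_iff)
    qed
  qed
  moreover have "V1 ` A \<inter> (\<lambda>(i,j). V2 i j) ` PQ = {}" by auto
  moreover have "card Q = card (V1 ` A \<union> (\<lambda>(i,j). V2 i j) ` PQ)" by (rule arg_cong[where f=card, OF Qeq])
  ultimately show ?thesis using fA PQ_finite by (simp add: card_Un_disjoint)
qed

lemma undist:
  assumes "x \<in> H_V n" "y \<in> H_V n" "x \<noteq> y" "\<And>q. q \<in> Q \<Longrightarrow> hdist x q = hdist y q"
  shows False
  using res[OF assms(1-3)] assms(4) by blast

lemma V2_of:
  assumes "a \<noteq> c" "a \<in> N" "c \<in> N"
  obtains i j where "V2 i j \<in> H_V n" "{i,j} = {a,c}" "i < j"
proof (cases "a < c")
  case True then show ?thesis using that[of a c] assms by (auto simp: H_V_V2 N_def)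
next
  case False then show ?thesis using that[of c a] assms by (auto simp: H_V_V2 N_def)
qed

lemma deg0: "deg v = 0 \<Longrightarrow> e \<in> F \<Longrightarrow> v \<notin> e"
  unfolding deg_def using F_finite by auto

lemma deg1: "deg v = 1 \<Longrightarrow> e \<in> F \<Longrightarrow> v \<in> e \<Longrightarrow> {f\<in>F. v\<in>f} = {e}"
proof -
  assume h: "deg v = 1" "e \<in> F" "v \<in> e"
  obtain x where x: "{f\<in>F. v\<in>f} = {x}" using h(1) unfolding deg_def by (rule card_1_singletonE)
  have "e \<in> {f\<in>F. v\<in>f}" using h by simp
  then have "e = x" using x by simp
  then show ?thesis using x by simp
qed

lemma deg_pos: "e \<in> F \<Longrightarrow> v \<in> e \<Longrightarrow> deg v \<ge> 1"
proof -
  assume h: "e \<in> F" "v \<in> e"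
  have "finite {f\<in>F. v\<in>f}" using F_finite by simp
  moreover have "e \<in> {f\<in>F. v\<in>f}" using h by simp
  ultimately have "card {f\<in>F. v\<in>f} > 0" using card_gt_0_iff by blast
  then show ?thesis unfolding deg_def by simp
qed

definition Iso where "Iso = {v\<in>N. v \<notin> A \<and> deg v = 0}"
definition Lf where "Lf = {v\<in>N. v \<notin> A \<and> deg v = 1}"
definition Dg where "Dg = {v\<in>N. v \<notin> A \<and> deg v \<ge> 2}"

lemma R1: "card Iso \<le> 1"
proof (rule ccontr)
  assume "\<not> card Iso \<le> 1"
  moreover have "finite Iso" unfolding Iso_def N_def by simp
  ultimately obtain z1 z2 where z: "z1 \<in> Iso" "z2 \<in> Iso" "z1 \<noteq> z2"
    by (auto simp: card_le_Suc0_iff_eq)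
  show False
  proof (rule undist[of "V1 z1" "V1 z2"])
    show "V1 z1 \<in> H_V n" "V1 z2 \<in> H_V n" using z unfolding Iso_def N_def by (auto simp: H_V_V1)
    show "V1 z1 \<noteq> V1 z2" using z by simp
    fix q assume "q \<in> Q"
    then show "hdist (V1 z1) q = hdist (V1 z2) q"
    proof (cases rule: Q_cases)
      case (1 t) then show ?thesis using z unfolding Iso_def by auto
    next
      case (2 i j)
      have "z1 \<notin> {i,j}" "z2 \<notin> {i,j}" using deg0 2 z unfolding Iso_def by auto
      then show ?thesis using 2 by (simp only: hd_V1V2; simp)
    qed
  qed
qed

lemma R2: "e \<in> F \<Longrightarrow> a \<in> e \<Longrightarrow> b \<in> e \<Longrightarrow> a \<noteq> b \<Longrightarrow> a \<in> Lf \<Longrightarrow> b \<in> Lf \<Longrightarrow> False"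
proof -
  assume e: "e \<in> F" "a \<in> e" "b \<in> e" "a \<noteq> b" "a \<in> Lf" "b \<in> Lf"
  have Ea: "{f\<in>F. a\<in>f} = {e}" using deg1 e unfolding Lf_def by auto
  have Eb: "{f\<in>F. b\<in>f} = {e}" using deg1 e unfolding Lf_def by auto
  show False
  proof (rule undist[of "V1 a" "V1 b"])
    show "V1 a \<in> H_V n" "V1 b \<in> H_V n" using e unfolding Lf_def N_def by (auto simp: H_V_V1)
    show "V1 a \<noteq> V1 b" using e by simp
    fix q assume "q \<in> Q"
    then show "hdist (V1 a) q = hdist (V1 b) q"
    proof (cases rule: Q_cases)
      case (1 t) then show ?thesis using e unfolding Lf_def by auto
    next
      case (2 i j)
      show ?thesis
      proof (cases "{i,j} = e")
        case True
        then have "a \<in> {i,j}" "b \<in> {i,j}" using e(2,3) by auto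
        then have "hdist (V1 a) (V2 i j) = 1" "hdist (V1 b) (V2 i j) = 1" by (simp only: hd_V1V2 if_True)+
        then show ?thesis unfolding 2(1) by (simp only:)
      next
        case False
        have "a \<notin> {i,j}"
        proof
          assume "a \<in> {i,j}"
          then have "{i,j} \<in> {f\<in>F. a\<in>f}" using 2(3) by simp
          then show False using Ea False by simp
        qed
        moreover have "b \<notin> {i,j}"
        proof
          assume "b \<in> {i,j}"
          then have "{i,j} \<in> {f\<in>F. b\<in>f}" using 2(3) by simp
          then show False using Eb False by simp
        qed
        ultimately have "hdist (V1 a) (V2 i j) = 3" "hdist (V1 b) (V2 i j) = 3" by (simp only: hd_V1V2 if_False)+
        then show ?thesis unfolding 2(1) by (simp only:)
      qed
    qed
  qed
qed

lemma R3:
  assumes z: "z \<in> Iso" and b: "b \<in> Dg" and a: "a \<in> Lf" and c: "c \<in> Lf" and ac: "a \<noteq> c"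
    and ea: "{b,a} \<in> F" and ec: "{b,c} \<in> F" and Eb: "{f\<in>F. b\<in>f} = {{b,a},{b,c}}"
  shows False
proof -
  have Ea: "{f\<in>F. a\<in>f} = {{b,a}}" using deg1 a ea unfolding Lf_def by auto
  have Ec: "{f\<in>F. c\<in>f} = {{b,c}}" using deg1 c ec unfolding Lf_def by auto
  have ba: "b \<noteq> a" using F_card[OF ea] by (cases "b = a") auto
  have bc: "b \<noteq> c" using F_card[OF ec] by (cases "b = c") auto
  have zE: "\<And>f. f \<in> F \<Longrightarrow> z \<notin> f" using deg0 z unfolding Iso_def by auto
  have za: "z \<noteq> a" "z \<noteq> b" "z \<noteq> c" using zE ea ec by auto
  have inN: "a \<in> N" "b \<in> N" "c \<in> N" "z \<in> N" using a b c z unfolding Lf_def Dg_def Iso_def by auto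
  obtain i j where x: "V2 i j \<in> H_V n" "{i,j} = {a,c}" "i < j" using V2_of[OF ac inN(1,3)] by blast
  obtain k l where y: "V2 k l \<in> H_V n" "{k,l} = {b,z}" "k < l" using V2_of[OF za(2)[symmetric] inN(2,4)] by blast
  show False
  proof (rule undist[of "V2 i j" "V2 k l"])
    show "V2 i j \<in> H_V n" "V2 k l \<in> H_V n" by fact+
    show "V2 i j \<noteq> V2 k l" using x y ba bc za by (auto simp: doubleton_eq_iff)
    fix q assume "q \<in> Q"
    then show "hdist (V2 i j) q = hdist (V2 k l) q"
    proof (cases rule: Q_cases)
      case (1 t)
      have "t \<notin> {a,b,c,z}" using 1 a b c z unfolding Lf_def Dg_def Iso_def by auto
      then show ?thesis using 1 x y by (simp only: hd_V2V1; auto)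
    next
      case (2 i' j')
      let ?f = "{i',j'}"
      have f1: "?f \<noteq> {a,c}"
      proof
        assume "?f = {a,c}"
        then have "?f \<in> {f\<in>F. a\<in>f}" using 2 by auto
        then have "?f = {b,a}" using Ea by auto
        then show False using \<open>?f = {a,c}\<close> ba bc by (auto simp: doubleton_eq_iff)
      qed
      have f2: "?f \<noteq> {b,z}" using zE 2 by auto
      have f3: "?f \<inter> {a,c} \<noteq> {} \<longleftrightarrow> ?f \<inter> {b,z} \<noteq> {}"
      proof
        assume "?f \<inter> {a,c} \<noteq> {}"
        then have "a \<in> ?f \<or> c \<in> ?f" by auto
        then have "?f \<in> {f\<in>F. a\<in>f} \<or> ?f \<in> {f\<in>F. c\<in>f}" using 2(3) by auto
        then have "?f = {b,a} \<or> ?f = {b,c}" unfolding Ea Ec by simp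
        then show "?f \<inter> {b,z} \<noteq> {}" by auto
      next
        assume "?f \<inter> {b,z} \<noteq> {}"
        then have "b \<in> ?f" using zE 2 by auto
        then have "?f \<in> {f\<in>F. b\<in>f}" using 2(3) by simp
        then have "?f = {b,a} \<or> ?f = {b,c}" unfolding Eb by simp
        then show "?f \<inter> {a,c} \<noteq> {}" by auto
      qed
      have f1': "({a,c} = ?f) = False" using f1 by auto
      have f2': "({b,z} = ?f) = False" using f2 by auto
      have f3': "({a,c} \<inter> ?f \<noteq> {}) = ({b,z} \<inter> ?f \<noteq> {})" using f3 by (metis Int_commute)
      have h1: "hdist (V2 i j) q = (if {a,c} \<inter> ?f \<noteq> {} then 2 else 4)"
        unfolding 2(1) hd_V2V2[OF x(3) 2(2)] x(2) f1' if_False ..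
      have h2: "hdist (V2 k l) q = (if {b,z} \<inter> ?f \<noteq> {} then 2 else 4)"
        unfolding 2(1) hd_V2V2[OF y(3) 2(2)] y(2) f2' if_False ..
      show ?thesis unfolding h1 h2 f3' ..
    qed
  qed
qed

end

context lbctx begin

lemma handshake: "(\<Sum>v\<in>N. deg v) = 2 * card F"
proof -
  have fN: "finite N" unfolding N_def by simp
  have "(\<Sum>v\<in>N. deg v) = (\<Sum>v\<in>N. \<Sum>e\<in>F. if v \<in> e then 1 else 0)"
  proof (rule sum.cong[OF refl])
    fix v
    have "deg v = (\<Sum>e\<in>{e\<in>F. v \<in> e}. 1)" unfolding deg_def by simp
    also have "\<dots> = (\<Sum>e\<in>F. if v \<in> e then 1 else 0)" using F_finite by (rule sum.inter_filter)
    finally show "deg v = (\<Sum>e\<in>F. if v \<in> e then 1 else 0)" .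
  qed
  also have "\<dots> = (\<Sum>e\<in>F. \<Sum>v\<in>N. if v \<in> e then 1 else 0)" by (rule sum.swap)
  also have "\<dots> = (\<Sum>e\<in>F. (2::nat))"
  proof (rule sum.cong[OF refl])
    fix e assume e: "e \<in> F"
    have "(\<Sum>v\<in>N. if v \<in> e then 1 else 0::nat) = (\<Sum>v\<in>{v\<in>N. v \<in> e}. 1::nat)" using fN by (rule sum.inter_filter[symmetric])
    also have "{v\<in>N. v \<in> e} = e" using F_sub[OF e] by auto
    finally show "(\<Sum>v\<in>N. if v \<in> e then 1 else 0::nat) = 2" using F_card[OF e] by simp
  qed
  finally show ?thesis by simp
qed

lemma finN: "finite N" unfolding N_def by simp

lemma N_split: "N = A \<union> (Iso \<union> (Lf \<union> Dg))"
  using A_sub unfolding Iso_def Lf_def Dg_def by auto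

lemma fin_sets: "finite A" "finite Iso" "finite Lf" "finite Dg"
  using finN A_sub unfolding Iso_def Lf_def Dg_def by (auto intro: finite_subset)

lemma disj: "A \<inter> (Iso \<union> (Lf \<union> Dg)) = {}" "Iso \<inter> (Lf \<union> Dg) = {}" "Lf \<inter> Dg = {}"
  unfolding Iso_def Lf_def Dg_def by auto

lemma card_N: "n = card A + card Iso + card Lf + card Dg"
proof -
  have "card N = n" unfolding N_def by simp
  moreover have "card N = card A + (card Iso + (card Lf + card Dg))"
    unfolding N_split using fin_sets disj by (simp add: card_Un_disjoint)
  ultimately show ?thesis by simp
qed

lemma sum_split: "2 * card F = (\<Sum>v\<in>A. deg v) + card Lf + (\<Sum>v\<in>Dg. deg v)"
proof -
  have "(\<Sum>v\<in>N. deg v) = (\<Sum>v\<in>A. deg v) + ((\<Sum>v\<in>Iso. deg v) + ((\<Sum>v\<in>Lf. deg v) + (\<Sum>v\<in>Dg. deg v)))"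
    unfolding N_split using fin_sets disj by (simp add: sum.union_disjoint)
  moreover have "(\<Sum>v\<in>Iso. deg v) = 0" unfolding Iso_def by simp
  moreover have "(\<Sum>v\<in>Lf. deg v) = card Lf" unfolding Lf_def by simp
  ultimately show ?thesis using handshake by simp
qed

definition ledge where "ledge v = (THE e. e \<in> F \<and> v \<in> e)"

lemma ledge: assumes "v \<in> Lf" shows "ledge v \<in> F" "v \<in> ledge v" "\<And>f. f \<in> F \<Longrightarrow> v \<in> f \<Longrightarrow> f = ledge v"
proof -
  have "deg v = 1" using assms unfolding Lf_def by simp
  then obtain x where x: "{f\<in>F. v\<in>f} = {x}" unfolding deg_def by (rule card_1_singletonE)
  have "x \<in> {f\<in>F. v\<in>f}" unfolding x by simp
  then have ex: "x \<in> F \<and> v \<in> x" by simp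
  have un: "f = x" if "f \<in> F \<and> v \<in> f" for f
  proof -
    have "f \<in> {f\<in>F. v\<in>f}" using that by simp
    then show "f = x" unfolding x by simp
  qed
  have lx: "ledge v = x" unfolding ledge_def
  proof (rule the_equality)
    show "x \<in> F \<and> v \<in> x" by (rule ex)
  next
    fix e assume "e \<in> F \<and> v \<in> e" then show "e = x" by (rule un)
  qed
  show "ledge v \<in> F" using ex lx by simp
  show "v \<in> ledge v" using ex lx by simp
  fix f assume "f \<in> F" "v \<in> f"
  then have "f = x" using un by blast
  then show "f = ledge v" using lx by simp
qed

definition F0 where "F0 = {e\<in>F. e \<inter> Lf = {}}"

lemma card_F: "card F = card Lf + card F0"
proof -
  have inj: "inj_on ledge Lf"
  proof (rule inj_onI)
    fix x y assume xy: "x \<in> Lf" "y \<in> Lf" "ledge x = ledge y"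
    show "x = y"
    proof (rule ccontr)
      assume "x \<noteq> y"
      have "y \<in> ledge x" using ledge(2)[OF xy(2)] xy(3) by simp
      then show False by (rule R2[OF ledge(1)[OF xy(1)] ledge(2)[OF xy(1)] _ \<open>x \<noteq> y\<close> xy(1,2)])
    qed
  qed
  have eq: "F = ledge ` Lf \<union> F0"
  proof
    show "F \<subseteq> ledge ` Lf \<union> F0"
    proof
      fix e assume e: "e \<in> F"
      show "e \<in> ledge ` Lf \<union> F0"
      proof (cases "e \<inter> Lf = {}")
        case True then show ?thesis using e unfolding F0_def by simp
      next
        case False
        then obtain v where "v \<in> e" "v \<in> Lf" by auto
        then have "e = ledge v" using ledge(3)[OF \<open>v \<in> Lf\<close> e] by simp
        then show ?thesis using \<open>v \<in> Lf\<close> by simp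
      qed
    qed
    show "ledge ` Lf \<union> F0 \<subseteq> F" using ledge(1) unfolding F0_def by auto
  qed
  have dj: "ledge ` Lf \<inter> F0 = {}" using ledge(2) unfolding F0_def by auto
  have "finite F0" using F_finite unfolding F0_def by simp
  then have "card F = card (ledge ` Lf) + card F0" using eq dj fin_sets(3)
    by (metis card_Un_disjoint finite_imageI)
  then show ?thesis using card_image[OF inj] by simp
qed

lemma Y:
  assumes z: "z \<in> Iso" and b: "b \<in> Dg" and d2: "deg b = 2"
  shows "\<exists>e\<in>F0. b \<in> e"
proof (rule ccontr)
  assume no: "\<not> (\<exists>e\<in>F0. b \<in> e)"
  obtain e1 e2 where e12: "{f\<in>F. b\<in>f} = {e1, e2}" "e1 \<noteq> e2"
    using d2 unfolding deg_def by (meson card_2_iff)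
  have e1: "e1 \<in> F" "b \<in> e1" and e2: "e2 \<in> F" "b \<in> e2" using e12(1) by blast+
  obtain a where a: "a \<noteq> b" "e1 = {b, a}" using F_two[OF e1] by auto
  obtain c where c: "c \<noteq> b" "e2 = {b, c}" using F_two[OF e2] by auto
  have ac: "a \<noteq> c" using a c e12(2) by auto
  have bL: "b \<notin> Lf" using b d2 unfolding Lf_def by simp
  have "e1 \<notin> F0" using no e1 by auto
  then have "a \<in> Lf" using e1 a bL unfolding F0_def by auto
  have "e2 \<notin> F0" using no e2 by auto
  then have "c \<in> Lf" using e2 c bL unfolding F0_def by auto
  show False
    by (rule R3[OF z b \<open>a \<in> Lf\<close> \<open>c \<in> Lf\<close> ac]) (use e1 e2 a c e12 in auto)
qed

lemma lower: assumes n6: "n \<ge> 6" shows "2 * n \<le> 3 * card Q"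
proof -
  define sA where "sA = (\<Sum>v\<in>A. deg v)"
  define s2 where "s2 = (\<Sum>v\<in>Dg. deg v - 2)"
  have sD: "(\<Sum>v\<in>Dg. deg v) = s2 + 2 * card Dg"
  proof -
    have "(\<Sum>v\<in>Dg. deg v) = (\<Sum>v\<in>Dg. (deg v - 2) + 2)"
      by (rule sum.cong[OF refl]) (auto simp: Dg_def)
    also have "\<dots> = (\<Sum>v\<in>Dg. deg v - 2) + (\<Sum>v\<in>Dg. 2)" by (rule sum.distrib)
    also have "(\<Sum>v\<in>Dg. 2::nat) = 2 * card Dg" by simp
    finally show ?thesis unfolding s2_def by simp
  qed
  have H: "2 * card F = sA + card Lf + s2 + 2 * card Dg" using sum_split sD unfolding sA_def by simp
  have J: "card F = card Lf + card F0" by (rule card_F)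
  have C: "n = card A + card Iso + card Lf + card Dg" by (rule card_N)
  have QQ: "card Q = card A + card F" by (rule cardQ)
  have I1: "card Iso \<le> 1" by (rule R1)
  show ?thesis
  proof (cases "card Iso = 0")
    case True then show ?thesis using H J C QQ by linarith
  next
    case False
    then have "card Iso = 1" using I1 by simp
    then obtain z where z: "Iso = {z}" by (rule card_1_singletonE)
    then have zI: "z \<in> Iso" by simp
    show ?thesis
    proof (rule ccontr)
      assume "\<not> ?thesis"
      then have small: "card A + card F0 + sA + s2 \<le> 1" using H J C QQ \<open>card Iso = 1\<close> by linarith
      have s2b: "deg b - 2 \<le> s2" if "b \<in> Dg" for b unfolding s2_def
        by (rule member_le_sum) (use that fin_sets(4) in auto)
      have s2bb: "\<And>b b'. b \<in> Dg \<Longrightarrow> b' \<in> Dg \<Longrightarrow> b \<noteq> b' \<Longrightarrow> (deg b - 2) + (deg b' - 2) \<le> s2"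
      proof -
        fix b b' assume bb: "b \<in> Dg" "b' \<in> Dg" "b \<noteq> b'"
        have "(\<Sum>v\<in>{b,b'}. deg v - 2) \<le> s2" unfolding s2_def
          by (rule sum_mono2) (use bb fin_sets(4) in auto)
        then show "(deg b - 2) + (deg b' - 2) \<le> s2" using bb by simp
      qed
      have fF0: "finite F0" using F_finite unfolding F0_def by simp
      have F0pos: "card F0 \<ge> 1" if "e \<in> F0" for e
      proof -
        have "card F0 > 0" by (rule card_gt_0_iff[THEN iffD2]) (use that fF0 in auto)
        then show ?thesis by simp
      qed
      have Dne: "Dg \<noteq> {}"
      proof
        assume D0: "Dg = {}"
        show False
        proof (cases "Lf = {}")
          case True
          then show False using C D0 \<open>card Iso = 1\<close> small n6 by simp
        next
          case False
          then obtain v where v: "v \<in> Lf" by auto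
          obtain x where x: "x \<noteq> v" "ledge v = {v, x}" using F_two[OF ledge(1,2)[OF v]] by auto
          have xe: "x \<in> ledge v" using x by simp
          have xN: "x \<in> N" using F_sub[OF ledge(1)[OF v]] xe by auto
          have dx: "deg x \<ge> 1" using deg_pos[OF ledge(1)[OF v] xe] .
          have "x \<notin> Iso" using dx unfolding Iso_def by auto
          moreover have "x \<notin> Lf" using R2[OF ledge(1)[OF v] ledge(2)[OF v] xe x(1)[symmetric] v] by blast
          moreover have "x \<notin> Dg" using D0 by simp
          ultimately have xA: "x \<in> A" using xN N_split by blast
          have "deg x \<le> sA" unfolding sA_def by (rule member_le_sum) (use xA fin_sets(1) in auto)
          moreover have "card A > 0" by (rule card_gt_0_iff[THEN iffD2]) (use xA fin_sets(1) in auto)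
          ultimately show False using small dx by linarith
        qed
      qed
      then obtain b where b: "b \<in> Dg" by auto
      have db: "deg b \<ge> 2" using b unfolding Dg_def by simp
      show False
      proof (cases "deg b \<ge> 3")
        case True
        then have "s2 \<ge> 1" using s2b[OF b] by linarith
        then have a0: "card A + card F0 + sA = 0" "s2 = 1" using small by linarith+
        have "deg b = 3" using s2b[OF b] True a0 by linarith
        have Db: "Dg = {b}"
        proof (rule ccontr)
          assume "Dg \<noteq> {b}"
          then obtain b' where b': "b' \<in> Dg" "b' \<noteq> b" using b by blast
          have "deg b' \<ge> 2" using b' unfolding Dg_def by simp
          then have "deg b' = 2" using s2bb[OF b b'(1) b'(2)[symmetric]] \<open>deg b = 3\<close> a0 by linarith
          then obtain e where "e \<in> F0" using Y[OF zI b'(1)] by blast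
          then show False using F0pos a0 by fastforce
        qed
        then have "card Dg = 1" by simp
        then show False using H J C a0 \<open>card Iso = 1\<close> n6 by linarith
      next
        case False
        then have "deg b = 2" using db by simp
        then obtain e where e: "e \<in> F0" "b \<in> e" using Y[OF zI b] by blast
        then have "card F0 \<ge> 1" using F0pos by blast
        then have a0: "card A + sA + s2 = 0" "card F0 = 1" using small by linarith+
        have F0e: "F0 = {e}" using a0(2) e(1) by (metis card_1_singletonE singletonD)
        have "Dg \<subseteq> e"
        proof
          fix b' assume b': "b' \<in> Dg"
          have "deg b' \<ge> 2" using b' unfolding Dg_def by simp
          then have "deg b' = 2" using s2b[OF b'] a0 by linarith
          then obtain e' where "e' \<in> F0" "b' \<in> e'" using Y[OF zI b'] by blast
          then show "b' \<in> e" using F0e by simp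
        qed
        moreover have "e \<in> F" using e unfolding F0_def by simp
        ultimately have "card Dg \<le> 2" using F_card card_mono F_finite
          by (metis F_elem finite.emptyI finite.insertI)
        then show False using H J C a0 \<open>card Iso = 1\<close> n6 by linarith
      qed
    qed
  qed
qed

end

lemma lower_bound:
  assumes "n \<ge> 6" "resolving_set (H_V n) H_E Q"
  shows "2 * n \<le> 3 * card Q"
proof -
  have "lbctx n Q" using assms(2) unfolding resolving_H lbctx_def by blast
  then show ?thesis using lbctx.lower assms(1) by blast
qed

lemma beta_ge:
  assumes "m = 3*k" "m < n" "n \<ge> 6"
  shows "2 * n \<le> 3 * beta_H n"
proof -
  have ex: "\<exists>j Q. finite Q \<and> resolving_set (H_V n) H_E Q \<and> card Q = j"
    using Qc_finite Qc_res[of m n] assms by auto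
  then have "\<exists>Q. finite Q \<and> resolving_set (H_V n) H_E Q \<and> card Q = beta_H n"
    unfolding beta_H_def metric_dim_def by (rule LeastI_ex)
  then obtain Q where Q: "resolving_set (H_V n) H_E Q" "card Q = beta_H n" by blast
  show ?thesis using lower_bound[OF assms(3) Q(1)] Q(2) by simp
qed

theorem corollary3p1:
  fixes n k :: nat
  assumes "n \<ge> 6" and "n = 3 * k"
  shows "2 * k < beta_H (n + 1) \<and> beta_H (n + 1) < beta_H (n + 2) \<and> beta_H (n + 2) \<le> 2 * (k + 1)"
proof -
  have l1: "2 * (n+1) \<le> 3 * beta_H (n+1)" using beta_ge[of n k "n+1"] assms by simp
  have l2: "2 * (n+2) \<le> 3 * beta_H (n+2)" using beta_ge[of n k "n+2"] assms by simp
  have u1: "beta_H (n+1) \<le> 1 + 2*k" using beta_le[of n k "n+1"] assms by simp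
  have u2: "beta_H (n+2) \<le> 2 + 2*k" using beta_le[of n k "n+2"] assms by simp
  define b1 where "b1 = beta_H (n+1)"
  define b2 where "b2 = beta_H (n+2)"
  have "2 * k < b1 \<and> b1 < b2 \<and> b2 \<le> 2 * (k + 1)" using l1 l2 u1 u2 assms unfolding b1_def[symmetric] b2_def[symmetric] by presburger
  then show ?thesis unfolding b1_def b2_def .
qed

end
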